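(* (1) For all $j\in\mathbb Z\cup\{\infty\}$ the first coordinate $x:\mathbb R^2\to\mathbb R$ descends to $x_j:X_j\to\mathbb R$ (i.e. $x=x_j\circ\hat\pi^j$), and for $j\in\mathbb Z$ the map $\hat y_j:\mathbb R^2\to S^1(m_v^{-j})$, $\hat y_j(x,y)=y\bmod m_v^{-j}$, descends to $y_j:X_j\to S^1(m_v^{-j})$. (2) If $\sigma$ is a $2$-cell of $X_j$, then $x_j(\sigma)$ is an interval of length $m^{-j}$ whose endpoints are the images of the two vertical $1$-cells of $\sigma$. (3) If $p,p'\in X_j$ and $\pi_j(p)=\pi_j(p')$, then $d_{S^1}(y_j(p),y_j(p'))\le2m_v^{-(j+1)}$. (4) If $\bar\sigma$ is a $2$-cell of $X_{j+1}$, then $y_j(\pi_j^{-1}(\bar\sigma))$ has diameter at most $5m_v^{-(j+1)}$.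
   Context: Standing construction ($n=2$). Fix an integer $L\ge100$, $m=4$, $m_v=3L$. For $j\in\mathbb Z$, $Y_j$ is the cell complex on $\mathbb R^2$ given by the tiling by rectangles $[am^{-j},(a+1)m^{-j}]\times[bm_v^{-j},(b+1)m_v^{-j}]$, $a,b\in\mathbb Z$; a $1$-cell of $Y_j$ is vertical if it is a translate of $\{0\}\times[0,m_v^{-j}]$. Let $\Phi(x,y)=(m^{-1}x,m_v^{-1}y)$. For $k,\ell\in\mathbb Z$, $i\in\{1,2,3\}$, let $a_{k,\ell,i}=\{k+\tfrac i4\}\times[(3\ell+i-1)m_v^{-1},(3\ell+i)m_v^{-1}]$. $\mathcal R$ is the equivalence relation on $\mathbb R^2$ generated by $p\sim p+(0,m_v^{-1})$ for $p\in a_{k,\ell,i}$. $\Phi^j_*\mathcal R=\{(\Phi^jp,\Phi^jq):(p,q)\in\mathcal R\}$; $\mathcal R_j$ is generated by $\Phi^i_*\mathcal R$, $i<j$; $\mathcal R_\infty$ by all of them. For $j\in\mathbb Z\cup\{\infty\}$, $X_j=\mathbb R^2/\mathcal R_j$, $\hat\pi^j$ the quotient map, $\pi_j:X_j\to X_{j+1}$ induced map. $X_j$ carries the CW structure whose open cells are images under $\hat\pi^j$ of open cells of $Y_j$ (vertical cells are images of vertical cells). $S^1(r)=\mathbb R/r\mathbb Z$ with the quotient metric $d_{S^1}$. *)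

theory Defs
  imports "HOL-Analysis.Analysis"
begin

type_synonym pt = "real \<times> real"

definition equiv_closure :: "'a rel \<Rightarrow> 'a rel" where
  "equiv_closure r = (r \<union> r\<inverse>)\<^sup>*"

definition mh :: real where "mh = 4"
definition mv :: "int \<Rightarrow> real" where "mv L = real_of_int (3 * L)"

definition PhiPow :: "int \<Rightarrow> int \<Rightarrow> pt \<Rightarrow> pt" where
  "PhiPow L j p = (mh powi (-j) * fst p, mv L powi (-j) * snd p)"

definition aseg :: "int \<Rightarrow> int \<Rightarrow> int \<Rightarrow> int \<Rightarrow> pt set" where
  "aseg L k l i = {k + of_int i / 4} \<times>
      {real_of_int (3 * l + i - 1) / mv L .. real_of_int (3 * l + i) / mv L}"

definition baseGen :: "int \<Rightarrow> pt rel" where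
  "baseGen L = {(p, (fst p, snd p + 1 / mv L)) | p.
      \<exists>k l i. i \<in> {1,2,3} \<and> p \<in> aseg L k l i}"

definition baseR :: "int \<Rightarrow> pt rel" where
  "baseR L = equiv_closure (baseGen L)"

definition pushR :: "int \<Rightarrow> int \<Rightarrow> pt rel \<Rightarrow> pt rel" where
  "pushR L i R = {(PhiPow L i p, PhiPow L i q) | p q. (p, q) \<in> R}"

definition Rj :: "int \<Rightarrow> int \<Rightarrow> pt rel" where
  "Rj L j = equiv_closure (\<Union>i\<in>{..<j}. pushR L i (baseR L))"

definition Rinf :: "int \<Rightarrow> pt rel" where
  "Rinf L = equiv_closure (\<Union>i. pushR L i (baseR L))"

definition Xq :: "pt rel \<Rightarrow> pt set set" where
  "Xq R = UNIV // R"

definition qmap :: "pt rel \<Rightarrow> pt \<Rightarrow> pt set" where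
  "qmap R p = R `` {p}"

text \<open>pi_j : X_j -> X_{j+1}, induced by the identity of R^2.\<close>
definition pij :: "int \<Rightarrow> int \<Rightarrow> pt set \<Rightarrow> pt set" where
  "pij L j C = Rj L (j + 1) `` C"

text \<open>Circle S^1(r) = R / rZ, elements represented by their representative in [0,r);
  quotient metric.\<close>
definition circ_mod :: "real \<Rightarrow> real \<Rightarrow> real" where
  "circ_mod r y = y - r * of_int \<lfloor>y / r\<rfloor>"

definition dS1 :: "real \<Rightarrow> real \<Rightarrow> real \<Rightarrow> real" where
  "dS1 r a b = (INF k\<in>(UNIV :: int set). \<bar>a - b + of_int k * r\<bar>)"

definition xdesc :: "pt set \<Rightarrow> real" where
  "xdesc C = fst (SOME p. p \<in> C)"

definition ydesc :: "int \<Rightarrow> int \<Rightarrow> pt set \<Rightarrow> real" where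
  "ydesc L j C = circ_mod (mv L powi (-j)) (snd (SOME p. p \<in> C))"

definition cell2 :: "int \<Rightarrow> int \<Rightarrow> int \<Rightarrow> int \<Rightarrow> pt set" where
  "cell2 L j a b = {of_int a * mh powi (-j) <..< of_int (a + 1) * mh powi (-j)} \<times>
                   {of_int b * mv L powi (-j) <..< of_int (b + 1) * mv L powi (-j)}"

definition vcell :: "int \<Rightarrow> int \<Rightarrow> int \<Rightarrow> int \<Rightarrow> pt set" where
  "vcell L j a b = {of_int a * mh powi (-j)} \<times>
                   {of_int b * mv L powi (-j) <..< of_int (b + 1) * mv L powi (-j)}"

end

theory Submission
  imports Defs
begin

lemma ec_refl: "(p,p) \<in> equiv_closure r" by (simp add: equiv_closure_def)

lemma ec_ker:
  assumes "(p,q) \<in> equiv_closure r" and "\<And>p q. (p,q) \<in> r \<Longrightarrow> G p = G q"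
  shows "G p = G q"
  using assms(1) unfolding equiv_closure_def
proof (induction rule: rtrancl_induct)
  case base then show ?case by simp
next
  case (step y z) then show ?case using assms(2) by auto
qed

lemma push_ker:
  assumes "\<And>p q. (p,q) \<in> baseGen L \<Longrightarrow> G (PhiPow L i p) = G (PhiPow L i q)"
    and "(p,q) \<in> pushR L i (baseR L)"
  shows "G p = G q"
proof -
  obtain p0 q0 where e: "p = PhiPow L i p0" "q = PhiPow L i q0" "(p0,q0) \<in> baseR L"
    using assms(2) unfolding pushR_def by auto
  have "(G \<circ> PhiPow L i) p0 = (G \<circ> PhiPow L i) q0"
    using e(3) unfolding baseR_def by (rule ec_ker) (use assms(1) in auto)
  then show ?thesis using e by simp
qed

lemma Rj_ker:
  assumes "(p,q) \<in> Rj L J"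
    and "\<And>i p q. i < J \<Longrightarrow> (p,q) \<in> baseGen L \<Longrightarrow> G (PhiPow L i p) = G (PhiPow L i q)"
  shows "G p = G q"
  using assms(1) unfolding Rj_def
  by (rule ec_ker) (auto intro: push_ker assms(2))

lemma Rinf_ker:
  assumes "(p,q) \<in> Rinf L"
    and "\<And>i p q. (p,q) \<in> baseGen L \<Longrightarrow> G (PhiPow L i p) = G (PhiPow L i q)"
  shows "G p = G q"
  using assms(1) unfolding Rinf_def
  by (rule ec_ker) (auto intro: push_ker assms(2))

lemma baseGen_fst: "(p,q) \<in> baseGen L \<Longrightarrow> fst (PhiPow L i p) = fst (PhiPow L i q)"
  unfolding baseGen_def PhiPow_def by auto

lemma cm_shift: assumes "r > 0" shows "circ_mod r (y + of_int N * r) = circ_mod r y"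
proof -
  have "(y + of_int N * r) / r = y / r + of_int N" using assms by (simp add: field_simps)
  then show ?thesis unfolding circ_mod_def by (simp add: algebra_simps)
qed

lemma mv_pos: "L \<ge> 100 \<Longrightarrow> mv L > 0" unfolding mv_def by simp

lemma gen_low:
  assumes L: "L \<ge> 100" and ij: "i < j" and pq: "(p,q) \<in> baseGen L"
  shows "circ_mod (mv L powi (-j)) (snd (PhiPow L i p)) = circ_mod (mv L powi (-j)) (snd (PhiPow L i q))"
proof -
  have q: "q = (fst p, snd p + 1 / mv L)" using pq unfolding baseGen_def by auto
  have m0: "mv L \<noteq> 0" using mv_pos[OF L] by simp
  define n where "n = nat (j - i - 1)"
  have "mv L powi (-i) / mv L = mv L powi (-i - 1)" using m0 by (simp add: power_int_diff)
  also have "-i - 1 = int n + (-j)" using ij unfolding n_def by simp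
  also have "mv L powi (int n + (-j)) = mv L ^ n * mv L powi (-j)" using m0 power_int_add[of "mv L" "int n" "-j"] by simp
  also have "mv L ^ n = of_int ((3*L)^n)" unfolding mv_def by simp
  finally have e: "mv L powi (-i) / mv L = of_int ((3*L)^n) * mv L powi (-j)" .
  have "snd (PhiPow L i q) = snd (PhiPow L i p) + of_int ((3*L)^n) * mv L powi (-j)"
    using e unfolding q PhiPow_def by (simp add: algebra_simps)
  moreover have "mv L powi (-j) > 0" using mv_pos[OF L] by simp
  ultimately show ?thesis using cm_shift[of "mv L powi (-j)" "snd (PhiPow L i p)" "(3*L)^n"] by metis
qed

definition tau :: "int \<Rightarrow> real \<Rightarrow> int" where
  "tau j x = (if 4 * mh powi j * x = of_int \<lfloor>4 * mh powi j * x\<rfloor> then \<lfloor>4 * mh powi j * x\<rfloor> mod 4 else 4)"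

definition hh :: "real \<Rightarrow> real" where
  "hh s = (if s = of_int \<lfloor>s\<rfloor> then 3 * of_int \<lfloor>s/3\<rfloor>
     else if s - 3 * of_int \<lfloor>s/3\<rfloor> < 1 then s
     else if s - 3 * of_int \<lfloor>s/3\<rfloor> < 2 then s - 1 else s)"

definition psi :: "int \<Rightarrow> int \<Rightarrow> int \<Rightarrow> real \<Rightarrow> real" where
  "psi L j t y = (if t = 0 then circ_mod (mv L powi (-j)) y
     else if t \<in> {1,2,3} then hh (mv L powi (j+1) * y - of_int (t - 1)) else y)"

definition FF :: "int \<Rightarrow> int \<Rightarrow> pt \<Rightarrow> real \<times> real" where
  "FF L j p = (fst p, psi L j (tau j (fst p)) (snd p))"

lemma hh_gen:
  assumes "3 * of_int l \<le> s" "s \<le> 3 * of_int l + 1"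
  shows "hh s = hh (s + 1)"
proof -
  have f1: "\<lfloor>s/3\<rfloor> = l" using assms by (simp add: floor_eq_iff field_simps)
  have f2: "\<lfloor>(s+1)/3\<rfloor> = l" using assms by (simp add: floor_eq_iff field_simps)
  show ?thesis
proof (cases "s = of_int \<lfloor>s\<rfloor>")
  case True
  then have "s + 1 = of_int \<lfloor>s + 1\<rfloor>" by (metis floor_add_int of_int_1 of_int_add)
  then show ?thesis unfolding hh_def using True f1 f2 by auto
next
  case False
  have ni: "s + 1 \<noteq> of_int \<lfloor>s + 1\<rfloor>" using False
    by (metis add_diff_cancel_right' floor_add_int of_int_1 of_int_diff)
  have a1: "s \<noteq> 3 * of_int l" using False by (metis floor_of_int of_int_mult of_int_numeral)
  have a2: "s \<noteq> 3 * of_int l + 1" using False by (metis floor_of_int of_int_1 of_int_add of_int_mult of_int_numeral)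
  have "s - 3 * of_int l > 0" "s - 3 * of_int l < 1" using assms a1 a2 by linarith+
  then show ?thesis unfolding hh_def using False ni f1 f2 by auto
qed
qed

lemma hh_bounds: "hh s \<le> s \<and> s \<le> hh s + 2 \<and>
   (s = of_int \<lfloor>s\<rfloor> \<longrightarrow> hh s = of_int (3 * \<lfloor>s/3\<rfloor>)) \<and>
   (s \<noteq> of_int \<lfloor>s\<rfloor> \<longrightarrow> hh s = s \<or> hh s = s - 1)"
proof (cases "s = of_int \<lfloor>s\<rfloor>")
  case True
  then obtain m where m: "s = of_int m" by blast
  have fl: "\<lfloor>real_of_int m / 3\<rfloor> = m div 3" using floor_divide_of_int_eq[of m 3] by simp
  have "3 * (m div 3) \<le> m" "m \<le> 3 * (m div 3) + 2" by auto
  then have "3 * real_of_int (m div 3) \<le> real_of_int m" "real_of_int m \<le> 3 * real_of_int (m div 3) + 2"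
    by linarith+
  then show ?thesis unfolding hh_def using m fl by auto
next
  case False
  have "3 * of_int \<lfloor>s/3\<rfloor> \<le> s" "s < 3 * of_int \<lfloor>s/3\<rfloor> + 3"
    by linarith+
  then show ?thesis unfolding hh_def using False by auto
qed

lemma hh_close: assumes "hh s = hh s'" shows "\<bar>s - s'\<bar> \<le> 2"
proof -
  have A: "hh s \<le> s" "s \<le> hh s + 2" "hh s' \<le> s'" "s' \<le> hh s' + 2" using hh_bounds by blast+
  show ?thesis using A assms by linarith
qed

lemma tau_gen:
  assumes ij: "i \<le> j" and p: "p \<in> aseg L k l i'" and i': "i' \<in> {1,2,3}"
  shows "tau j (fst (PhiPow L i p)) = (if i = j then i' else 0)"
proof -
  define n where "n = nat (j - i)"
  have fp: "fst p = of_int k + of_int i' / 4" using p unfolding aseg_def by auto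
  have "mh powi j * mh powi (-i) = mh powi (int n)"
    using ij unfolding n_def mh_def by (simp add: power_int_add[symmetric])
  then have e: "4 * mh powi j * fst (PhiPow L i p) = of_int (4^n * (4*k + i'))"
    unfolding PhiPow_def fp mh_def by (simp add: field_simps)
  have "(4^n * (4*k + i')) mod 4 = (if i = j then i' else 0)"
  proof (cases "i = j")
    case True then have "n = 0" unfolding n_def by simp
    then show ?thesis using True i' by auto
  next
    case False then have "n \<ge> 1" unfolding n_def using ij by simp
    then have "(4::int) dvd 4^n" by (simp add: dvd_power)
    then show ?thesis using False by auto
  qed
  then show ?thesis unfolding tau_def e by (simp only: floor_of_int) simp
qed

lemma mvpow_inv: "L \<ge> 100 \<Longrightarrow> mv L powi (j+1) * mv L powi (-j) = mv L"
  using mv_pos[of L] by (simp add: power_int_add[symmetric])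

lemma gen_FF:
  assumes L: "L \<ge> 100" and ij: "i \<le> j" and pq: "(p,q) \<in> baseGen L"
  shows "FF L j (PhiPow L i p) = FF L j (PhiPow L i q)"
proof -
  obtain k l i' where p: "p \<in> aseg L k l i'" and i': "i' \<in> {1,2,3}"
    and q: "q = (fst p, snd p + 1 / mv L)" using pq unfolding baseGen_def by auto
  have fq: "fst (PhiPow L i q) = fst (PhiPow L i p)" using q unfolding PhiPow_def by simp
  have t: "tau j (fst (PhiPow L i p)) = (if i = j then i' else 0)" using tau_gen[OF ij p i'] .
  show ?thesis
  proof (cases "i = j")
    case False
    then have "i < j" using ij by simp
    then show ?thesis unfolding FF_def psi_def using t fq False gen_low[OF L _ pq] by simp
  next
    case True
    have m0: "mv L > 0" using mv_pos[OF L] .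
    define s where "s = mv L * snd p - of_int (i' - 1)"
    have y: "real_of_int (3 * l + i' - 1) / mv L \<le> snd p" "snd p \<le> real_of_int (3 * l + i') / mv L"
      using p unfolding aseg_def by auto
    have s1: "3 * of_int l \<le> s" "s \<le> 3 * of_int l + 1"
      using y m0 unfolding s_def by (simp_all add: field_simps)
    have g: "\<And>c d y m::real. c * (d * (y + 1/m)) = (c*d)*y + (c*d)/m" by (simp add: algebra_simps)
    have e1: "mv L powi (j+1) * snd (PhiPow L i p) - of_int (i' - 1) = s"
      using True mvpow_inv[OF L, of j] unfolding s_def PhiPow_def
      by (simp only: snd_conv mult.assoc[symmetric])
    have e2: "mv L powi (j+1) * snd (PhiPow L i q) - of_int (i' - 1) = s + 1"
      using True mvpow_inv[OF L, of j] m0 unfolding s_def PhiPow_def q snd_conv g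
      by simp
    have P1: "psi L j i' (snd (PhiPow L i p)) = hh s" using i' e1 unfolding psi_def by auto
    have P2: "psi L j i' (snd (PhiPow L i q)) = hh (s+1)" using i' e2 unfolding psi_def by auto
    show ?thesis using fq t True P1 P2 hh_gen[OF s1] unfolding FF_def by simp
  qed
qed


lemma FF_bound:
  assumes L: "L \<ge> 100" and e: "FF L j p = FF L j q"
  shows "\<exists>k::int. \<bar>snd p - snd q + of_int k * mv L powi (-j)\<bar> \<le> 2 * mv L powi (-(j+1))"
proof -
  define r where "r = mv L powi (-j)"
  define d where "d = mv L powi (-(j+1))"
  define M where "M = mv L powi (j+1)"
  have r0: "r > 0" "d > 0" "M > 0" using mv_pos[OF L] unfolding r_def d_def M_def by auto
  have Md: "M * d = 1" using mv_pos[OF L] unfolding M_def d_def by (simp add: power_int_add[symmetric])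
  have fe: "fst p = fst q" and pe: "psi L j (tau j (fst p)) (snd p) = psi L j (tau j (fst p)) (snd q)"
    using e unfolding FF_def by auto
  consider "tau j (fst p) = 0" | "tau j (fst p) \<in> {1,2,3}" | "tau j (fst p) \<noteq> 0 \<and> tau j (fst p) \<notin> {1,2,3}" by blast
  then show ?thesis
  proof cases
    case 1
    then have "circ_mod r (snd p) = circ_mod r (snd q)" using pe unfolding psi_def r_def by simp
    then have "snd p - snd q + of_int (\<lfloor>snd q / r\<rfloor> - \<lfloor>snd p / r\<rfloor>) * r = 0"
      unfolding circ_mod_def by (simp add: algebra_simps)
    then show ?thesis using r0 unfolding r_def d_def by (metis abs_zero less_imp_le mult_pos_pos zero_less_numeral)
  next
    case 2
    define c :: real where "c = of_int (tau j (fst p) - 1)"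
    have "hh (M * snd p - c) = hh (M * snd q - c)" using 2 pe unfolding psi_def M_def c_def by auto
    then have "\<bar>(M * snd p - c) - (M * snd q - c)\<bar> \<le> 2" by (rule hh_close)
    moreover have "\<bar>(M * snd p - c) - (M * snd q - c)\<bar> = M * \<bar>snd p - snd q\<bar>"
      using r0 by (simp add: abs_mult right_diff_distrib[symmetric])
    ultimately have "M * \<bar>snd p - snd q\<bar> \<le> 2" by simp
    then have "d * (M * \<bar>snd p - snd q\<bar>) \<le> d * 2" using r0 by (simp add: mult_left_mono)
    then have "\<bar>snd p - snd q\<bar> \<le> 2 * d" using Md by (simp add: mult.assoc[symmetric] mult.commute)
    then show ?thesis unfolding d_def by (intro exI[of _ 0]) simp
  next
    case 3
    then have "snd p = snd q" using pe unfolding psi_def by simp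
    then show ?thesis using r0 unfolding d_def by (intro exI[of _ 0]) simp
  qed
qed

lemma dS1_le:
  assumes "r > 0"
  shows "dS1 r (circ_mod r a) (circ_mod r b) \<le> \<bar>a - b + of_int k * r\<bar>"
proof -
  define k' where "k' = k + \<lfloor>a/r\<rfloor> - \<lfloor>b/r\<rfloor>"
  have "circ_mod r a - circ_mod r b + of_int k' * r = a - b + of_int k * r"
    unfolding circ_mod_def k'_def by (simp add: algebra_simps)
  moreover have "bdd_below ((\<lambda>k::int. \<bar>circ_mod r a - circ_mod r b + of_int k * r\<bar>) ` UNIV)"
    by (rule bdd_belowI[of _ 0]) auto
  ultimately show ?thesis unfolding dS1_def by (metis cINF_lower UNIV_I)
qed


lemma some_in: assumes "(p,p) \<in> R" shows "(p, SOME q. q \<in> qmap R p) \<in> R"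
proof -
  have "p \<in> qmap R p" using assms unfolding qmap_def by simp
  then have "(SOME q. q \<in> qmap R p) \<in> qmap R p" by (rule someI)
  then show ?thesis unfolding qmap_def by simp
qed

lemma Rj_refl: "(p,p) \<in> Rj L j" unfolding Rj_def by (rule ec_refl)

lemma part1x: "fst p = xdesc (qmap (Rj L j) p)"
proof -
  have "(p, SOME q. q \<in> qmap (Rj L j) p) \<in> Rj L j" by (rule some_in[OF Rj_refl])
  then have "fst p = fst (SOME q. q \<in> qmap (Rj L j) p)"
    by (rule Rj_ker[where G=fst]) (rule baseGen_fst)
  then show ?thesis unfolding xdesc_def qmap_def .
qed

lemma part1inf: "fst p = xdesc (qmap (Rinf L) p)"
proof -
  have "(p,p) \<in> Rinf L" unfolding Rinf_def by (rule ec_refl)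
  then have "(p, SOME q. q \<in> qmap (Rinf L) p) \<in> Rinf L" by (rule some_in)
  then have "fst p = fst (SOME q. q \<in> qmap (Rinf L) p)"
    by (rule Rinf_ker[where G=fst]) (rule baseGen_fst)
  then show ?thesis unfolding xdesc_def qmap_def .
qed

lemma Rj_cm: assumes L: "L \<ge> 100" and "(p,q) \<in> Rj L j"
  shows "circ_mod (mv L powi (-j)) (snd p) = circ_mod (mv L powi (-j)) (snd q)"
  using assms(2) by (rule Rj_ker[where G="\<lambda>p. circ_mod (mv L powi (-j)) (snd p)"]) (rule gen_low[OF L])

lemma part1y: assumes L: "L \<ge> 100"
  shows "circ_mod (mv L powi (-j)) (snd p) = ydesc L j (qmap (Rj L j) p)"
proof -
  have "(p, SOME q. q \<in> qmap (Rj L j) p) \<in> Rj L j" by (rule some_in[OF Rj_refl])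
  then show ?thesis using Rj_cm[OF L] unfolding ydesc_def qmap_def by blast
qed

lemma Rj_FF: assumes L: "L \<ge> 100" and J: "J \<le> j + 1" and "(p,q) \<in> Rj L J"
  shows "FF L j p = FF L j q"
  using assms(3) by (rule Rj_ker[where G="FF L j"]) (rule gen_FF[OF L], use J in simp_all)

lemma xd_img: "xdesc ` (qmap (Rj L j) ` A) = fst ` A"
  using part1x by (simp add: image_image)

lemma Xq_elem:
  assumes "P \<in> Xq (Rj L j)"
  obtains p0 where "P = Rj L j `` {p0}" "(p0, SOME q. q \<in> P) \<in> Rj L j"
    "ydesc L j P = circ_mod (mv L powi (-j)) (snd (SOME q. q \<in> P))"
proof -
  obtain p0 where P: "P = Rj L j `` {p0}" using assms unfolding Xq_def by (auto elim: quotientE)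
  have "(p0, SOME q. q \<in> P) \<in> Rj L j" using some_in[OF Rj_refl, of p0 L j] P unfolding qmap_def by simp
  then show ?thesis using that P unfolding ydesc_def by blast
qed


lemma part2: assumes L: "L \<ge> 100"
  shows "\<exists>u v. v - u = mh powi (-j)
           \<and> {u<..<v} \<subseteq> xdesc ` (qmap (Rj L j) ` cell2 L j a b)
           \<and> xdesc ` (qmap (Rj L j) ` cell2 L j a b) \<subseteq> {u..v}
           \<and> xdesc ` (qmap (Rj L j) ` vcell L j a b) = {u}
           \<and> xdesc ` (qmap (Rj L j) ` vcell L j (a + 1) b) = {v}"
proof -
  define u where "u = of_int a * mh powi (-j)"
  define v where "v = of_int (a+1) * mh powi (-j)"
  define B where "B = {of_int b * mv L powi (-j) <..< of_int (b + 1) * mv L powi (-j)}"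
  have "mv L powi (-j) > 0" using mv_pos[OF L] by simp
  then have Bne: "B \<noteq> {}" unfolding B_def by (simp add: algebra_simps)
  have c: "cell2 L j a b = {u<..<v} \<times> B" unfolding cell2_def u_def v_def B_def by simp
  have v1: "vcell L j a b = {u} \<times> B" unfolding vcell_def u_def B_def by simp
  have v2: "vcell L j (a+1) b = {v} \<times> B" unfolding vcell_def v_def B_def by simp
  have "v - u = mh powi (-j)" unfolding u_def v_def by (simp add: algebra_simps)
  then show ?thesis using Bne unfolding xd_img c v1 v2 by (intro exI[of _ u] exI[of _ v]) auto
qed

lemma part3: assumes L: "L \<ge> 100" and P: "P \<in> Xq (Rj L j)" and P': "P' \<in> Xq (Rj L j)"
  and e: "pij L j P = pij L j P'"
  shows "dS1 (mv L powi (-j)) (ydesc L j P) (ydesc L j P') \<le> 2 * mv L powi (-(j + 1))"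
proof -
  obtain p0 where P0: "P = Rj L j `` {p0}" "(p0, SOME q. q \<in> P) \<in> Rj L j"
    "ydesc L j P = circ_mod (mv L powi (-j)) (snd (SOME q. q \<in> P))" using Xq_elem[OF P] by blast
  obtain p0' where P0': "P' = Rj L j `` {p0'}" "(p0', SOME q. q \<in> P') \<in> Rj L j"
    "ydesc L j P' = circ_mod (mv L powi (-j)) (snd (SOME q. q \<in> P'))" using Xq_elem[OF P'] by blast
  define q where "q = (SOME q. q \<in> P)"
  define q' where "q' = (SOME q. q \<in> P')"
  have "q \<in> P" using P0 unfolding q_def by simp
  then have "q \<in> pij L j P" unfolding pij_def using Rj_refl by blast
  then obtain q'' where q'': "q'' \<in> P'" "(q'', q) \<in> Rj L (j+1)" using e unfolding pij_def by auto
  have "FF L j q'' = FF L j q" using Rj_FF[OF L _ q''(2)] by simp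
  moreover have "FF L j p0' = FF L j q''" using Rj_FF[OF L _, of j] q''(1) P0'(1) by simp
  moreover have "FF L j p0' = FF L j q'" using Rj_FF[OF L _, of j] P0'(2) unfolding q'_def by simp
  ultimately have "FF L j q = FF L j q'" by simp
  then obtain k where k: "\<bar>snd q - snd q' + of_int k * mv L powi (-j)\<bar> \<le> 2 * mv L powi (-(j+1))"
    using FF_bound[OF L] by blast
  have "mv L powi (-j) > 0" using mv_pos[OF L] by simp
  then show ?thesis using dS1_le[of "mv L powi (-j)" "snd q" "snd q'" k] k P0(3) P0'(3)
    unfolding q_def q'_def by simp
qed

lemma part4: assumes L: "L \<ge> 100" and P: "P \<in> Xq (Rj L j)" and P': "P' \<in> Xq (Rj L j)"
  and c: "pij L j P \<in> qmap (Rj L (j + 1)) ` cell2 L (j + 1) a b"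
  and c': "pij L j P' \<in> qmap (Rj L (j + 1)) ` cell2 L (j + 1) a b"
  shows "dS1 (mv L powi (-j)) (ydesc L j P) (ydesc L j P') \<le> 5 * mv L powi (-(j + 1))"
proof -
  obtain p0 where P0: "P = Rj L j `` {p0}" "(p0, SOME q. q \<in> P) \<in> Rj L j"
    "ydesc L j P = circ_mod (mv L powi (-j)) (snd (SOME q. q \<in> P))" using Xq_elem[OF P] by blast
  obtain p0' where P0': "P' = Rj L j `` {p0'}" "(p0', SOME q. q \<in> P') \<in> Rj L j"
    "ydesc L j P' = circ_mod (mv L powi (-j)) (snd (SOME q. q \<in> P'))" using Xq_elem[OF P'] by blast
  define q where "q = (SOME q. q \<in> P)"
  define q' where "q' = (SOME q. q \<in> P')"
  obtain x where x: "x \<in> cell2 L (j + 1) a b" "pij L j P = Rj L (j+1) `` {x}" using c unfolding qmap_def by auto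
  obtain x' where x': "x' \<in> cell2 L (j + 1) a b" "pij L j P' = Rj L (j+1) `` {x'}" using c' unfolding qmap_def by auto
  have "q \<in> P" using P0 unfolding q_def by simp
  then have "q \<in> pij L j P" unfolding pij_def using Rj_refl by blast
  then have "(x, q) \<in> Rj L (j+1)" using x by simp
  then have "FF L j q = FF L j x" using Rj_FF[OF L] by (metis order_refl)
  then obtain k1 where k1: "\<bar>snd q - snd x + of_int k1 * mv L powi (-j)\<bar> \<le> 2 * mv L powi (-(j+1))"
    using FF_bound[OF L] by blast
  have "q' \<in> P'" using P0' unfolding q'_def by simp
  then have "q' \<in> pij L j P'" unfolding pij_def using Rj_refl by blast
  then have "(x', q') \<in> Rj L (j+1)" using x' by simp
  then have "FF L j x' = FF L j q'" using Rj_FF[OF L] by (metis order_refl)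
  then obtain k2 where k2: "\<bar>snd x' - snd q' + of_int k2 * mv L powi (-j)\<bar> \<le> 2 * mv L powi (-(j+1))"
    using FF_bound[OF L] by blast
  have "\<bar>snd x - snd x'\<bar> < mv L powi (-(j+1))"
    using x(1) x'(1) unfolding cell2_def by (auto simp: algebra_simps abs_less_iff)
  then have "\<bar>snd q - snd q' + of_int (k1 + k2) * mv L powi (-j)\<bar> \<le> 5 * mv L powi (-(j+1))"
    using k1 k2 by (simp add: algebra_simps abs_le_iff abs_less_iff) linarith?
  moreover have "mv L powi (-j) > 0" using mv_pos[OF L] by simp
  ultimately show ?thesis using dS1_le[of "mv L powi (-j)" "snd q" "snd q'" "k1+k2"] P0(3) P0'(3)
    unfolding q_def q'_def by simp
qed

theorem mainTheorem6:
  fixes L :: int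
  assumes "L \<ge> 100"
  shows
   "(\<forall>j::int. (\<forall>p. fst p = xdesc (qmap (Rj L j) p))
              \<and> (\<forall>p. circ_mod (mv L powi (-j)) (snd p) = ydesc L j (qmap (Rj L j) p)))
    \<and> (\<forall>p. fst p = xdesc (qmap (Rinf L) p))
    \<and> (\<forall>j a b::int.
        (\<exists>u v. v - u = mh powi (-j)
           \<and> {u<..<v} \<subseteq> xdesc ` (qmap (Rj L j) ` cell2 L j a b)
           \<and> xdesc ` (qmap (Rj L j) ` cell2 L j a b) \<subseteq> {u..v}
           \<and> xdesc ` (qmap (Rj L j) ` vcell L j a b) = {u}
           \<and> xdesc ` (qmap (Rj L j) ` vcell L j (a + 1) b) = {v}))
    \<and> (\<forall>j::int. \<forall>P\<in>Xq (Rj L j). \<forall>P'\<in>Xq (Rj L j).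
        pij L j P = pij L j P' \<longrightarrow>
        dS1 (mv L powi (-j)) (ydesc L j P) (ydesc L j P') \<le> 2 * mv L powi (-(j + 1)))
    \<and> (\<forall>j a b::int. \<forall>P\<in>Xq (Rj L j). \<forall>P'\<in>Xq (Rj L j).
        pij L j P \<in> qmap (Rj L (j + 1)) ` cell2 L (j + 1) a b \<longrightarrow>
        pij L j P' \<in> qmap (Rj L (j + 1)) ` cell2 L (j + 1) a b \<longrightarrow>
        dS1 (mv L powi (-j)) (ydesc L j P) (ydesc L j P') \<le> 5 * mv L powi (-(j + 1)))"
  apply (intro conjI allI ballI impI)
  apply (rule part1x)
  apply (rule part1y[OF assms])
  apply (rule part1inf)
  apply (rule part2[OF assms])
  apply (erule (2) part3[OF assms])
  apply (erule (3) part4[OF assms])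
  done

end
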